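(* Let $G=(V,E)$ be a finite connected regular undirected unweighted graph with $n$ vertices, let $\lambda\in[0,1]$ and $S_0\subseteq V$. Then $\mathrm{fp}^{\lambda,1}_G(S_0)=|S_0|/n$, and for every $r>0$ the expected absorption time of the $\lambda$-mixed Moran process with fitness $r$ from $S_0$ is at most $C_r n^4$, where $C_r$ depends only on $r$ (i.e., it is $O_r(n^4)$).
   Context: The $\lambda$-mixed Moran process on a connected graph $G=(V,E)$ with $n=|V|\ge 2$: each vertex hosts a resident (fitness $1$) or mutant (fitness $r>0$); the state is the mutant set $S_t\subseteq V$. Each step, independently: with probability $\lambda$ a Birth-death step (a vertex $u$ chosen with probability proportional to fitness among all vertices; a uniformly random neighbor of $u$ takes $u$'s type); with probability $1-\lambda$ a death-Birth step (a uniformly random vertex $v$ dies; a neighbor $u$ of $v$ chosen with probability proportional to fitness among the neighbors of $v$; $v$ takes $u$'s type). $\mathrm{fp}^{\lambda,r}_G(S_0)$ is the probability of reaching $S_t=V$ from $S_0$; the absorption time is the expected number of steps until $S_t\in\{\emptyset,V\}$. *)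

theory Defs
  imports Complex_Main "HOL-Library.Extended_Nonnegative_Real"
begin

definition simple_graph :: "'a set \<Rightarrow> ('a \<Rightarrow> 'a \<Rightarrow> bool) \<Rightarrow> bool" where
  "simple_graph V E \<longleftrightarrow> finite V \<and> (\<forall>x y. E x y \<longrightarrow> x \<in> V \<and> y \<in> V)
     \<and> (\<forall>x y. E x y \<longrightarrow> E y x) \<and> (\<forall>x. \<not> E x x)"

definition nbrs :: "'a set \<Rightarrow> ('a \<Rightarrow> 'a \<Rightarrow> bool) \<Rightarrow> 'a \<Rightarrow> 'a set" where
  "nbrs V E v = {u \<in> V. E v u}"

definition graph_connected :: "'a set \<Rightarrow> ('a \<Rightarrow> 'a \<Rightarrow> bool) \<Rightarrow> bool" where
  "graph_connected V E \<longleftrightarrow> (\<forall>u\<in>V. \<forall>v\<in>V. (\<lambda>x y. E x y \<and> x \<in> V \<and> y \<in> V)\<^sup>*\<^sup>* u v)"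

definition graph_regular :: "'a set \<Rightarrow> ('a \<Rightarrow> 'a \<Rightarrow> bool) \<Rightarrow> bool" where
  "graph_regular V E \<longleftrightarrow> (\<exists>d. \<forall>v\<in>V. card (nbrs V E v) = d)"

definition fit :: "real \<Rightarrow> 'a set \<Rightarrow> 'a \<Rightarrow> real" where
  "fit r S u = (if u \<in> S then r else 1)"

definition take_type :: "'a set \<Rightarrow> 'a \<Rightarrow> 'a \<Rightarrow> 'a set" where
  "take_type S u v = (if u \<in> S then insert v S else S - {v})"

definition moran_trans ::
  "'a set \<Rightarrow> ('a \<Rightarrow> 'a \<Rightarrow> bool) \<Rightarrow> real \<Rightarrow> real \<Rightarrow> 'a set \<Rightarrow> 'a set \<Rightarrow> real" where
  "moran_trans V E lam r S T =
     lam * (\<Sum>u\<in>V. \<Sum>v\<in>nbrs V E u.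
        fit r S u / (\<Sum>w\<in>V. fit r S w) * (1 / real (card (nbrs V E u)))
        * (if take_type S u v = T then 1 else 0))
   + (1 - lam) * (\<Sum>v\<in>V. \<Sum>u\<in>nbrs V E v.
        (1 / real (card V)) * (fit r S u / (\<Sum>w\<in>nbrs V E v. fit r S w))
        * (if take_type S u v = T then 1 else 0))"

text \<open>Distribution of S_t (as a function on states, supported on subsets of V).\<close>
fun moran_dist ::
  "'a set \<Rightarrow> ('a \<Rightarrow> 'a \<Rightarrow> bool) \<Rightarrow> real \<Rightarrow> real \<Rightarrow> 'a set \<Rightarrow> nat \<Rightarrow> 'a set \<Rightarrow> real" where
  "moran_dist V E lam r S0 0 T = (if T = S0 then 1 else 0)"
| "moran_dist V E lam r S0 (Suc t) T =
     (\<Sum>S\<in>Pow V. moran_dist V E lam r S0 t S * moran_trans V E lam r S T)"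

text \<open>Fixation probability: probability of eventually reaching S_t = V
  (V is absorbing, so this is the limit of Pr[S_t = V]).\<close>
definition fix_prob ::
  "'a set \<Rightarrow> ('a \<Rightarrow> 'a \<Rightarrow> bool) \<Rightarrow> real \<Rightarrow> real \<Rightarrow> 'a set \<Rightarrow> real" where
  "fix_prob V E lam r S0 = lim (\<lambda>t. moran_dist V E lam r S0 t V)"

text \<open>Expected absorption time: E[tau] = sum_{t>=0} Pr[tau > t]
  = sum_t Pr[S_t \<notin> {{}, V}] (both {} and V are absorbing); may be infinite.\<close>
definition absorption_time ::
  "'a set \<Rightarrow> ('a \<Rightarrow> 'a \<Rightarrow> bool) \<Rightarrow> real \<Rightarrow> real \<Rightarrow> 'a set \<Rightarrow> ennreal" where
  "absorption_time V E lam r S0 =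
     (\<Sum>t. ennreal (1 - moran_dist V E lam r S0 t {} - moran_dist V E lam r S0 t V))"

end

theory Submission
  imports Defs
begin

lemma path_cross:
  assumes "R\<^sup>*\<^sup>* x y" "x \<in> S" "y \<notin> S"
  shows "\<exists>u v. R u v \<and> u \<in> S \<and> v \<notin> S"
  using assms by (induction rule: rtranclp_induct) auto

locale mg =
  fixes V :: "'a set" and E :: "'a \<Rightarrow> 'a \<Rightarrow> bool" and lam r :: real
  assumes sg: "simple_graph V E" and conn: "graph_connected V E" and reg: "graph_regular V E"
    and n2: "card V \<ge> 2" and l0: "0 \<le> lam" and l1: "lam \<le> 1" and rpos: "0 < r"
begin

lemma finV: "finite V" using sg simple_graph_def by auto
lemma nbrs_sub: "nbrs V E u \<subseteq> V" by (auto simp: nbrs_def)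
lemma fin_nbrs: "finite (nbrs V E u)" using finV nbrs_sub finite_subset by blast
lemma Esym: "E u v \<Longrightarrow> E v u" using sg unfolding simple_graph_def by blast
lemma EV: "E u v \<Longrightarrow> u \<in> V \<and> v \<in> V" using sg unfolding simple_graph_def by blast
lemma nV: "real (card V) \<ge> 2" using n2 by simp
lemma Vne: "V \<noteq> {}" using n2 by auto

lemma nbr_ex: assumes u: "u \<in> V" shows "\<exists>v. E u v"
proof -
  have "\<exists>v\<in>V. v \<noteq> u"
  proof (rule ccontr)
    assume "\<not> (\<exists>v\<in>V. v \<noteq> u)"
    then have "V \<subseteq> {u}" by blast
    then have "card V \<le> 1" using card_mono[of "{u}" V] by simp
    then show False using n2 by simp
  qed
  then obtain v where v: "v \<in> V" "v \<noteq> u" by blast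
  have "(\<lambda>x y. E x y \<and> x \<in> V \<and> y \<in> V)\<^sup>*\<^sup>* u v"
    using conn u v(1) unfolding graph_connected_def by blast
  from path_cross[OF this, of "{u}"] v obtain a b where "E a b" "a \<in> {u}" by blast
  then show ?thesis by blast
qed

lemma dpos: "u \<in> V \<Longrightarrow> card (nbrs V E u) > 0"
  using nbr_ex[of u] EV fin_nbrs by (auto simp: nbrs_def card_gt_0_iff)

lemma d_le: "real (card (nbrs V E u)) \<le> real (card V)"
  using card_mono[OF finV nbrs_sub] by simp

lemma cross_edge:
  assumes "S \<subseteq> V" "S \<noteq> {}" "S \<noteq> V"
  shows "\<exists>u v. u \<in> S \<and> v \<in> V \<and> v \<notin> S \<and> E u v"
proof -
  obtain x where x: "x \<in> S" using assms by auto
  obtain y where y: "y \<in> V" "y \<notin> S" using assms by auto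
  have "(\<lambda>x y. E x y \<and> x \<in> V \<and> y \<in> V)\<^sup>*\<^sup>* x y" using conn x y assms(1)
    by (auto simp: graph_connected_def)
  from path_cross[OF this x y(2)] show ?thesis by auto
qed

definition "m = min r 1"
definition "M = max r 1"

lemma m_pos: "0 < m" using rpos by (simp add: m_def)
lemma mM: "m \<le> M" by (simp add: m_def M_def)
lemma fit_ge: "m \<le> fit r S u" by (auto simp: fit_def m_def)
lemma fit_le: "fit r S u \<le> M" by (auto simp: fit_def M_def)
lemma fit_pos: "0 < fit r S u" using rpos by (auto simp: fit_def)

definition "W S = (\<Sum>w\<in>V. fit r S w)"
definition "Wn S v = (\<Sum>w\<in>nbrs V E v. fit r S w)"

lemma W_pos: "0 < W S"
  unfolding W_def by (intro sum_pos finV Vne fit_pos)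
lemma W_le: "W S \<le> real (card V) * M"
  unfolding W_def by (intro sum_bounded_above fit_le)
lemma Wn_pos: "v \<in> V \<Longrightarrow> 0 < Wn S v"
  unfolding Wn_def using fin_nbrs dpos[of v] fit_pos by (intro sum_pos) auto
lemma Wn_le: "Wn S v \<le> real (card (nbrs V E v)) * M"
  unfolding Wn_def by (intro sum_bounded_above fit_le)
lemma Wn_ge: "real (card (nbrs V E v)) * m \<le> Wn S v"
  unfolding Wn_def by (intro sum_bounded_below fit_ge)

definition "wB S u v = fit r S u / W S * (1 / real (card (nbrs V E u)))"
definition "wD S u v = (1 / real (card V)) * (fit r S u / Wn S v)"
definition "BD S F = (\<Sum>u\<in>V. \<Sum>v\<in>nbrs V E u. wB S u v * F u v)"
definition "DB S F = (\<Sum>v\<in>V. \<Sum>u\<in>nbrs V E v. wD S u v * F u v)"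
definition "Exp S g = lam * BD S (\<lambda>u v. g (take_type S u v)) + (1 - lam) * DB S (\<lambda>u v. g (take_type S u v))"


lemma sum_ind:
  assumes "finite A" "finite U" "\<And>u. finite (B u)" "\<And>u v. u \<in> U \<Longrightarrow> v \<in> B u \<Longrightarrow> h u v \<in> A"
  shows "(\<Sum>T\<in>A. (\<Sum>u\<in>U. \<Sum>v\<in>B u. a u v * (if h u v = T then 1 else 0)) * (g T :: real))
        = (\<Sum>u\<in>U. \<Sum>v\<in>B u. a u v * g (h u v))"
proof -
  have "(\<Sum>T\<in>A. (\<Sum>u\<in>U. \<Sum>v\<in>B u. a u v * (if h u v = T then 1 else 0)) * g T)
     = (\<Sum>T\<in>A. \<Sum>u\<in>U. \<Sum>v\<in>B u. a u v * (if h u v = T then 1 else 0) * g T)"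
    by (subst sum_distrib_right, subst sum_distrib_right, rule refl)
  also have "\<dots> = (\<Sum>u\<in>U. \<Sum>T\<in>A. \<Sum>v\<in>B u. a u v * (if h u v = T then 1 else 0) * g T)"
    by (rule sum.swap)
  also have "\<dots> = (\<Sum>u\<in>U. \<Sum>v\<in>B u. \<Sum>T\<in>A. a u v * (if h u v = T then 1 else 0) * g T)"
    by (rule sum.cong[OF refl], rule sum.swap)
  also have "\<dots> = (\<Sum>u\<in>U. \<Sum>v\<in>B u. a u v * g (h u v))"
  proof (intro sum.cong refl)
    fix u v assume uv: "u \<in> U" "v \<in> B u"
    then have hA: "h u v \<in> A" using assms by blast
    have "(\<Sum>T\<in>A. a u v * (if h u v = T then 1 else 0) * g T) = (\<Sum>T\<in>A. if h u v = T then a u v * g (h u v) else 0)"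
      by (intro sum.cong refl) auto
    also have "\<dots> = a u v * g (h u v)" using hA assms(1) by (simp add: sum.delta)
    finally show "(\<Sum>T\<in>A. a u v * (if h u v = T then 1 else 0) * g T) = a u v * g (h u v)" .
  qed
  finally show ?thesis .
qed

lemma tt_in: "S \<subseteq> V \<Longrightarrow> v \<in> V \<Longrightarrow> take_type S u v \<in> Pow V"
  by (auto simp: take_type_def)

lemma trans_sum:
  assumes S: "S \<subseteq> V"
  shows "(\<Sum>T\<in>Pow V. moran_trans V E lam r S T * g T) = Exp S g"
proof -
  have "(\<Sum>T\<in>Pow V. moran_trans V E lam r S T * g T) =
     (\<Sum>T\<in>Pow V. lam * ((\<Sum>u\<in>V. \<Sum>v\<in>nbrs V E u. wB S u v
        * (if take_type S u v = T then 1 else 0)) * g T)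
   + (1 - lam) * ((\<Sum>v\<in>V. \<Sum>u\<in>nbrs V E v. wD S u v
        * (if take_type S u v = T then 1 else 0)) * g T))"
    unfolding moran_trans_def wB_def wD_def W_def Wn_def by (simp only: distrib_right mult.assoc)
  also have "\<dots> = lam * (\<Sum>T\<in>Pow V. (\<Sum>u\<in>V. \<Sum>v\<in>nbrs V E u. wB S u v
        * (if take_type S u v = T then 1 else 0)) * g T)
   + (1 - lam) * (\<Sum>T\<in>Pow V. (\<Sum>v\<in>V. \<Sum>u\<in>nbrs V E v. wD S u v
        * (if take_type S u v = T then 1 else 0)) * g T)"
    by (simp only: sum.distrib sum_distrib_left)
  also have "(\<Sum>T\<in>Pow V. (\<Sum>u\<in>V. \<Sum>v\<in>nbrs V E u. wB S u v
        * (if take_type S u v = T then 1 else 0)) * g T) = BD S (\<lambda>u v. g (take_type S u v))"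
    unfolding BD_def
    by (rule sum_ind) (use finV fin_nbrs S nbrs_sub tt_in in blast)+
  also have "(\<Sum>T\<in>Pow V. (\<Sum>v\<in>V. \<Sum>u\<in>nbrs V E v. wD S u v
        * (if take_type S u v = T then 1 else 0)) * g T) = DB S (\<lambda>u v. g (take_type S u v))"
    unfolding DB_def
    by (rule sum_ind[where h="\<lambda>v u. take_type S u v"]) (use finV fin_nbrs S nbrs_sub tt_in in blast)+
  finally show ?thesis unfolding Exp_def .
qed

lemma BD_lin: "BD S (\<lambda>u v. \<alpha> + \<beta> * F u v + G u v) = \<alpha> * BD S (\<lambda>_ _. 1) + \<beta> * BD S F + BD S G"
proof -
  have "BD S (\<lambda>u v. \<alpha> + \<beta> * F u v + G u v) = (\<Sum>u\<in>V. \<Sum>v\<in>nbrs V E u.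
     \<alpha> * (wB S u v * 1) + \<beta> * (wB S u v * F u v) + wB S u v * G u v)"
    unfolding BD_def by (intro sum.cong refl) (simp add: algebra_simps)
  then show ?thesis unfolding BD_def by (simp only: sum.distrib sum_distrib_left)
qed

lemma DB_lin: "DB S (\<lambda>u v. \<alpha> + \<beta> * F u v + G u v) = \<alpha> * DB S (\<lambda>_ _. 1) + \<beta> * DB S F + DB S G"
proof -
  have "DB S (\<lambda>u v. \<alpha> + \<beta> * F u v + G u v) = (\<Sum>v\<in>V. \<Sum>u\<in>nbrs V E v.
     \<alpha> * (wD S u v * 1) + \<beta> * (wD S u v * F u v) + wD S u v * G u v)"
    unfolding DB_def by (intro sum.cong refl) (simp add: algebra_simps)
  then show ?thesis unfolding DB_def by (simp only: sum.distrib sum_distrib_left)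
qed

lemma BD_one: "BD S (\<lambda>_ _. 1) = 1"
proof -
  have "BD S (\<lambda>_ _. 1) = (\<Sum>u\<in>V. fit r S u / W S)"
    unfolding BD_def wB_def using dpos by (intro sum.cong refl) simp
  also have "\<dots> = 1" using W_pos[of S] by (simp add: sum_divide_distrib[symmetric] W_def)
  finally show ?thesis .
qed

lemma DB_one: "DB S (\<lambda>_ _. 1) = 1"
proof -
  have "DB S (\<lambda>_ _. 1) = (\<Sum>v\<in>V. 1 / real (card V))"
    unfolding DB_def wD_def
  proof (intro sum.cong refl)
    fix v assume v: "v \<in> V"
    have "(\<Sum>u\<in>nbrs V E v. 1 / real (card V) * (fit r S u / Wn S v) * 1)
       = 1 / real (card V) * ((\<Sum>u\<in>nbrs V E v. fit r S u) / Wn S v)"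
      by (simp add: sum_distrib_left sum_divide_distrib)
    also have "\<dots> = 1 / real (card V)" using Wn_pos[OF v, of S] by (simp add: Wn_def)
    finally show "(\<Sum>u\<in>nbrs V E v. 1 / real (card V) * (fit r S u / Wn S v) * 1) = 1 / real (card V)" .
  qed
  also have "\<dots> = 1" using Vne finV by simp
  finally show ?thesis .
qed

lemma Exp_one: "Exp S (\<lambda>_. 1) = 1"
  unfolding Exp_def using BD_one DB_one by simp

lemma sumN: "(\<Sum>u\<in>nbrs V E v. F u) = (\<Sum>u\<in>V. if E v u then F u else 0)"
  unfolding nbrs_def using finV by (simp add: sum.inter_filter)

lemma swapN: "(\<Sum>v\<in>V. \<Sum>u\<in>nbrs V E v. H u v) = (\<Sum>u\<in>V. \<Sum>v\<in>nbrs V E u. H u v)"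
proof -
  have "(\<Sum>v\<in>V. \<Sum>u\<in>nbrs V E v. H u v) = (\<Sum>v\<in>V. \<Sum>u\<in>V. if E v u then H u v else 0)"
    by (simp add: sumN)
  also have "\<dots> = (\<Sum>u\<in>V. \<Sum>v\<in>V. if E v u then H u v else 0)" by (rule sum.swap)
  also have "\<dots> = (\<Sum>u\<in>V. \<Sum>v\<in>V. if E u v then H u v else 0)"
    using Esym by (intro sum.cong refl) (metis)
  also have "\<dots> = (\<Sum>u\<in>V. \<Sum>v\<in>nbrs V E u. H u v)" by (simp add: sumN)
  finally show ?thesis .
qed

definition "delta S u v = (if u \<in> S \<and> v \<notin> S then 1 else if u \<notin> S \<and> v \<in> S then -1 else (0::real))"

lemma delta_zero: "(\<Sum>u\<in>V. \<Sum>v\<in>nbrs V E u. delta S u v) = 0"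
proof -
  let ?Z = "(\<Sum>u\<in>V. \<Sum>v\<in>nbrs V E u. delta S u v)"
  have sw: "(\<Sum>v\<in>V. \<Sum>u\<in>nbrs V E v. delta S u v) = ?Z" by (rule swapN)
  have 1: "?Z = (\<Sum>v\<in>V. \<Sum>u\<in>nbrs V E v. - delta S u v)"
    by (intro sum.cong refl) (auto simp: delta_def)
  have 2: "(\<Sum>v\<in>V. \<Sum>u\<in>nbrs V E v. - delta S u v) = - ?Z"
    using sw by (simp only: sum_negf)
  from 1 2 show ?thesis by linarith
qed

lemma card_tt:
  assumes "S \<subseteq> V"
  shows "real (card (take_type S u v)) = real (card S) + delta S u v"
proof -
  have fS: "finite S" using assms finV finite_subset by blast
  show ?thesis
  proof (cases "u \<in> S")
    case True
    then show ?thesis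
    proof (cases "v \<in> S")
      case True
      then show ?thesis using \<open>u \<in> S\<close> by (simp add: take_type_def delta_def insert_absorb)
    next
      case False
      then show ?thesis using \<open>u \<in> S\<close> fS by (simp add: take_type_def delta_def)
    qed
  next
    case False
    then show ?thesis
    proof (cases "v \<in> S")
      case True
      have "card S > 0" using True fS card_gt_0_iff by blast
      then have c1: "1 \<le> card S" by linarith
      have cd: "card (S - {v}) = card S - 1" using True fS by simp
      have eq: "take_type S u v = S - {v}" using \<open>u \<notin> S\<close> by (simp add: take_type_def)
      have d: "delta S u v = -1" using \<open>u \<notin> S\<close> True by (simp add: delta_def)
      have "real (card (S - {v})) = real (card S) - 1" using c1 cd by (simp add: of_nat_diff)
      then show ?thesis by (simp add: eq d)
    next
      case False
      then show ?thesis using \<open>u \<notin> S\<close> by (simp add: take_type_def delta_def)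
    qed
  qed
qed

definition "dg = card (nbrs V E (SOME v. v \<in> V))"

lemma deg: "v \<in> V \<Longrightarrow> card (nbrs V E v) = dg"
proof -
  assume v: "v \<in> V"
  obtain d where d: "\<forall>v\<in>V. card (nbrs V E v) = d" using reg by (auto simp: graph_regular_def)
  have "(SOME v. v \<in> V) \<in> V" using v by (rule someI)
  then show ?thesis using d v by (simp add: dg_def)
qed

lemma dg_pos: "0 < real dg"
proof -
  obtain v where "v \<in> V" using Vne by auto
  then show ?thesis using dpos[of v] deg[of v] by simp
qed

lemma dg_le: "real dg \<le> real (card V)"
proof -
  obtain v where "v \<in> V" using Vne by auto
  then show ?thesis using d_le[of v] deg[of v] by simp
qed

lemma frac_neg: assumes "(a::real) \<le> 0" "0 < x" "x \<le> y" shows "a / x \<le> a / y"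
proof (rule divide_left_mono_neg)
  show "0 < x * y" using assms by (meson mult_pos_pos order_less_le_trans)
qed (use assms in auto)
lemma frac_pos: assumes "(a::real) \<ge> 0" "0 < x" "x \<le> y" shows "a / y \<le> a / x"
proof (rule divide_left_mono)
  show "0 < y * x" using assms by (meson mult_pos_pos order_less_le_trans)
qed (use assms in auto)

lemma BD_form: "BD S (delta S) = 1 / (W S * real dg) * (\<Sum>u\<in>V. \<Sum>v\<in>nbrs V E u. fit r S u * delta S u v)"
  unfolding BD_def sum_distrib_left
  by (intro sum.cong refl) (simp add: wB_def deg)

lemma BD_drift_ge: "1 \<le> r \<Longrightarrow> 0 \<le> BD S (delta S)"
proof -
  assume r1: "1 \<le> r"
  have "0 = (\<Sum>u\<in>V. \<Sum>v\<in>nbrs V E u. delta S u v)" using delta_zero by simp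
  also have "\<dots> \<le> (\<Sum>u\<in>V. \<Sum>v\<in>nbrs V E u. fit r S u * delta S u v)"
    using r1 by (intro sum_mono) (auto simp: fit_def delta_def)
  finally have "0 \<le> (\<Sum>u\<in>V. \<Sum>v\<in>nbrs V E u. fit r S u * delta S u v)" .
  then show ?thesis unfolding BD_form using W_pos[of S] dg_pos by simp
qed

lemma BD_drift_le: "r \<le> 1 \<Longrightarrow> BD S (delta S) \<le> 0"
proof -
  assume r1: "r \<le> 1"
  have "(\<Sum>u\<in>V. \<Sum>v\<in>nbrs V E u. fit r S u * delta S u v) \<le> (\<Sum>u\<in>V. \<Sum>v\<in>nbrs V E u. delta S u v)"
    using r1 by (intro sum_mono) (auto simp: fit_def delta_def)
  also have "\<dots> = 0" using delta_zero by simp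
  finally have "(\<Sum>u\<in>V. \<Sum>v\<in>nbrs V E u. fit r S u * delta S u v) \<le> 0" .
  then show ?thesis unfolding BD_form using W_pos[of S] dg_pos by (simp add: divide_nonpos_pos)
qed

lemma DB_form: "DB S (delta S) = (\<Sum>v\<in>V. (1 / real (card V)) * ((\<Sum>u\<in>nbrs V E v. fit r S u * delta S u v) / Wn S v))"
  unfolding DB_def wD_def sum_divide_distrib sum_distrib_left
  by (intro sum.cong refl) simp

lemma DB_zero_form: "(\<Sum>v\<in>V. (1 / real (card V)) * ((\<Sum>u\<in>nbrs V E v. delta S u v) / real dg)) = 0"
proof -
  have "(\<Sum>v\<in>V. (1 / real (card V)) * ((\<Sum>u\<in>nbrs V E v. delta S u v) / real dg))
     = (1 / real (card V)) / real dg * (\<Sum>v\<in>V. \<Sum>u\<in>nbrs V E v. delta S u v)"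
    unfolding sum_divide_distrib sum_distrib_left by (intro sum.cong refl) simp
  also have "(\<Sum>v\<in>V. \<Sum>u\<in>nbrs V E v. delta S u v) = 0" by (subst swapN) (rule delta_zero)
  finally show ?thesis by simp
qed

lemma sum_delta_sign:
  "v \<in> S \<Longrightarrow> (\<Sum>u\<in>nbrs V E v. delta S u v) \<le> 0"
  "v \<notin> S \<Longrightarrow> 0 \<le> (\<Sum>u\<in>nbrs V E v. delta S u v)"
  by (auto intro!: sum_nonpos sum_nonneg simp: delta_def)

lemma fit_delta:
  "v \<in> S \<Longrightarrow> (\<Sum>u\<in>nbrs V E v. fit r S u * delta S u v) = (\<Sum>u\<in>nbrs V E v. delta S u v)"
  "v \<notin> S \<Longrightarrow> (\<Sum>u\<in>nbrs V E v. fit r S u * delta S u v) = r * (\<Sum>u\<in>nbrs V E v. delta S u v)"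
  by (auto simp: sum_distrib_left fit_def delta_def intro!: sum.cong)

lemma per_v_ge:
  assumes r1: "1 \<le> r" and v: "v \<in> V"
  shows "(\<Sum>u\<in>nbrs V E v. delta S u v) / real dg \<le> (\<Sum>u\<in>nbrs V E v. fit r S u * delta S u v) / Wn S v"
proof (cases "v \<in> S")
  case True
  have "real dg * 1 \<le> Wn S v" using Wn_ge[of v S] deg[OF v] r1 by (simp add: m_def)
  then show ?thesis unfolding fit_delta(1)[OF True]
    using sum_delta_sign(1)[OF True] dg_pos by (intro frac_neg) auto
next
  case False
  let ?a = "(\<Sum>u\<in>nbrs V E v. delta S u v)"
  have a0: "0 \<le> ?a" using sum_delta_sign(2)[OF False] .
  have Wr: "Wn S v \<le> real dg * r" using Wn_le[of S v] deg[OF v] r1 by (simp add: M_def)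
  have "?a / real dg = r * ?a / (real dg * r)" using rpos by simp
  also have "\<dots> \<le> r * ?a / Wn S v"
    using Wr a0 rpos Wn_pos[OF v, of S] by (intro frac_pos) auto
  finally show ?thesis unfolding fit_delta(2)[OF False] .
qed

lemma per_v_le:
  assumes r1: "r \<le> 1" and v: "v \<in> V"
  shows "(\<Sum>u\<in>nbrs V E v. fit r S u * delta S u v) / Wn S v \<le> (\<Sum>u\<in>nbrs V E v. delta S u v) / real dg"
proof (cases "v \<in> S")
  case True
  have "Wn S v \<le> real dg * 1" using Wn_le[of S v] deg[OF v] r1 by (simp add: M_def)
  then show ?thesis unfolding fit_delta(1)[OF True]
    using sum_delta_sign(1)[OF True] Wn_pos[OF v, of S] by (intro frac_neg) auto
next
  case False
  let ?a = "(\<Sum>u\<in>nbrs V E v. delta S u v)"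
  have a0: "0 \<le> ?a" using sum_delta_sign(2)[OF False] .
  have Wr: "real dg * r \<le> Wn S v" using Wn_ge[of v S] deg[OF v] r1 by (simp add: m_def)
  have "r * ?a / Wn S v \<le> r * ?a / (real dg * r)"
    using Wr a0 rpos dg_pos by (intro frac_pos) auto
  also have "\<dots> = ?a / real dg" using rpos by simp
  finally show ?thesis unfolding fit_delta(2)[OF False] .
qed

lemma DB_drift_ge: "1 \<le> r \<Longrightarrow> 0 \<le> DB S (delta S)"
proof -
  assume r1: "1 \<le> r"
  have "0 = (\<Sum>v\<in>V. (1 / real (card V)) * ((\<Sum>u\<in>nbrs V E v. delta S u v) / real dg))"
    using DB_zero_form by simp
  also have "\<dots> \<le> DB S (delta S)" unfolding DB_form
    using per_v_ge[OF r1] by (intro sum_mono mult_left_mono) auto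
  finally show ?thesis .
qed

lemma DB_drift_le: "r \<le> 1 \<Longrightarrow> DB S (delta S) \<le> 0"
proof -
  assume r1: "r \<le> 1"
  have "DB S (delta S) \<le> (\<Sum>v\<in>V. (1 / real (card V)) * ((\<Sum>u\<in>nbrs V E v. delta S u v) / real dg))"
    unfolding DB_form
    using per_v_le[OF r1] by (intro sum_mono mult_left_mono) auto
  also have "\<dots> = 0" using DB_zero_form by simp
  finally show ?thesis .
qed

definition "c0 = m / (M * real (card V) ^ 2)"

lemma c0_pos: "0 < c0"
  using m_pos mM nV unfolding c0_def by (intro divide_pos_pos mult_pos_pos) auto

lemma wB_nonneg: "0 \<le> wB S u v"
  unfolding wB_def using fit_pos[of S u] W_pos[of S] by (intro mult_nonneg_nonneg divide_nonneg_nonneg) auto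
lemma Wn_nonneg: "0 \<le> Wn S v"
  unfolding Wn_def by (intro sum_nonneg less_imp_le fit_pos)
lemma wD_nonneg: "0 \<le> wD S u v"
  unfolding wD_def using fit_pos[of S u] Wn_nonneg[of S v] by (intro mult_nonneg_nonneg divide_nonneg_nonneg) auto

lemma BD_nonneg: "(\<And>u v. 0 \<le> F u v) \<Longrightarrow> 0 \<le> BD S F"
  unfolding BD_def by (intro sum_nonneg mult_nonneg_nonneg wB_nonneg)
lemma DB_nonneg: "(\<And>u v. 0 \<le> F u v) \<Longrightarrow> 0 \<le> DB S F"
  unfolding DB_def by (intro sum_nonneg mult_nonneg_nonneg wD_nonneg)

lemma c0_alt: "c0 = m / (real (card V) * M) * (1 / real (card V))"
  unfolding c0_def by (simp add: power2_eq_square field_simps)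

lemma BD_sq:
  assumes S: "S \<subseteq> V" "S \<noteq> {}" "S \<noteq> V"
  shows "c0 \<le> BD S (\<lambda>u v. (delta S u v)\<^sup>2)"
proof -
  obtain u0 v0 where e: "u0 \<in> S" "v0 \<in> V" "v0 \<notin> S" "E u0 v0" using cross_edge[OF S] by blast
  have u0V: "u0 \<in> V" using e S by blast
  have v0N: "v0 \<in> nbrs V E u0" using e by (simp add: nbrs_def)
  have d1: "delta S u0 v0 = 1" using e by (simp add: delta_def)
  have "wB S u0 v0 * (delta S u0 v0)\<^sup>2 \<le> (\<Sum>v\<in>nbrs V E u0. wB S u0 v * (delta S u0 v)\<^sup>2)"
    by (rule member_le_sum[OF v0N]) (auto intro: mult_nonneg_nonneg wB_nonneg fin_nbrs)
  also have "\<dots> \<le> BD S (\<lambda>u v. (delta S u v)\<^sup>2)" unfolding BD_def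
    by (rule member_le_sum[OF u0V, where f="\<lambda>u. \<Sum>v\<in>nbrs V E u. wB S u v * (delta S u v)\<^sup>2"])
       (auto intro!: sum_nonneg mult_nonneg_nonneg wB_nonneg finV)
  finally have 1: "wB S u0 v0 \<le> BD S (\<lambda>u v. (delta S u v)\<^sup>2)" using d1 by simp
  have a: "m / (real (card V) * M) \<le> fit r S u0 / W S"
    using fit_ge[of S u0] m_pos W_pos[of S] W_le[of S] by (intro frac_le) auto
  have b: "1 / real (card V) \<le> 1 / real (card (nbrs V E u0))"
    using d_le[of u0] dpos[OF u0V] by (intro frac_le) auto
  have "0 \<le> fit r S u0 / W S" using fit_pos[of S u0] W_pos[of S] by (simp add: less_imp_le)
  then have "c0 \<le> wB S u0 v0" unfolding c0_alt wB_def
    using a b m_pos mM nV by (intro mult_mono) auto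
  with 1 show ?thesis by linarith
qed

lemma DB_sq:
  assumes S: "S \<subseteq> V" "S \<noteq> {}" "S \<noteq> V"
  shows "c0 \<le> DB S (\<lambda>u v. (delta S u v)\<^sup>2)"
proof -
  obtain u0 v0 where e: "u0 \<in> S" "v0 \<in> V" "v0 \<notin> S" "E u0 v0" using cross_edge[OF S] by blast
  have u0N: "u0 \<in> nbrs V E v0" using e S Esym by (auto simp: nbrs_def)
  have d1: "delta S u0 v0 = 1" using e by (simp add: delta_def)
  have "wD S u0 v0 * (delta S u0 v0)\<^sup>2 \<le> (\<Sum>u\<in>nbrs V E v0. wD S u v0 * (delta S u v0)\<^sup>2)"
    by (rule member_le_sum[OF u0N, where f="\<lambda>u. wD S u v0 * (delta S u v0)\<^sup>2"])
       (auto intro: mult_nonneg_nonneg wD_nonneg fin_nbrs)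
  also have "\<dots> \<le> DB S (\<lambda>u v. (delta S u v)\<^sup>2)" unfolding DB_def
    by (rule member_le_sum[OF e(2), where f="\<lambda>v. \<Sum>u\<in>nbrs V E v. wD S u v * (delta S u v)\<^sup>2"])
       (auto intro!: sum_nonneg mult_nonneg_nonneg wD_nonneg finV)
  finally have 1: "wD S u0 v0 \<le> DB S (\<lambda>u v. (delta S u v)\<^sup>2)" using d1 by simp
  have Wb: "Wn S v0 \<le> real (card V) * M"
  proof -
    have "Wn S v0 \<le> real (card (nbrs V E v0)) * M" by (rule Wn_le)
    also have "\<dots> \<le> real (card V) * M" using d_le[of v0] mM m_pos by (intro mult_right_mono) auto
    finally show ?thesis .
  qed
  have a: "m / (real (card V) * M) \<le> fit r S u0 / Wn S v0"
    using fit_ge[of S u0] m_pos Wn_pos[OF e(2), of S] Wb by (intro frac_le) auto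
  have "c0 = 1 / real (card V) * (m / (real (card V) * M))" unfolding c0_alt by simp
  also have "\<dots> \<le> wD S u0 v0" unfolding wD_def
    using a nV by (intro mult_left_mono) auto
  finally show ?thesis using 1 by linarith
qed

definition "aa = (if 1 \<le> r then 0 else real (card V))"
definition "ff T = (real (card T) - aa)\<^sup>2"

lemma ff_tt: "S \<subseteq> V \<Longrightarrow> ff (take_type S u v) = ff S + (2 * (real (card S) - aa)) * delta S u v + (delta S u v)\<^sup>2"
  unfolding ff_def by (simp add: card_tt power2_eq_square algebra_simps)

lemma BD_zero: "BD S (\<lambda>_ _. 0) = 0" by (simp add: BD_def)
lemma DB_zero: "DB S (\<lambda>_ _. 0) = 0" by (simp add: DB_def)

lemma Exp_ff:
  assumes S: "S \<subseteq> V"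
  shows "ff S + c0 * (if S \<noteq> {} \<and> S \<noteq> V then 1 else 0) \<le> Exp S ff"
proof -
  define k where "k = 2 * (real (card S) - aa)"
  define c where "c = c0 * (if S \<noteq> {} \<and> S \<noteq> V then 1 else 0)"
  have fq: "(\<lambda>u v. ff (take_type S u v)) = (\<lambda>u v. ff S + k * delta S u v + (delta S u v)\<^sup>2)"
    using ff_tt[OF S] by (simp add: k_def)
  have BDe: "BD S (\<lambda>u v. ff (take_type S u v)) = ff S + k * BD S (delta S) + BD S (\<lambda>u v. (delta S u v)\<^sup>2)"
    unfolding fq BD_lin BD_one by simp
  have DBe: "DB S (\<lambda>u v. ff (take_type S u v)) = ff S + k * DB S (delta S) + DB S (\<lambda>u v. (delta S u v)\<^sup>2)"
    unfolding fq DB_lin DB_one by simp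
  have sV: "real (card S) \<le> real (card V)" using card_mono[OF finV S] by simp
  have dr: "0 \<le> k * BD S (delta S) \<and> 0 \<le> k * DB S (delta S)"
  proof (cases "1 \<le> r")
    case True
    then have "0 \<le> k" by (simp add: k_def aa_def)
    then show ?thesis using BD_drift_ge[OF True] DB_drift_ge[OF True] by simp
  next
    case False
    then have "k \<le> 0" using sV by (simp add: k_def aa_def)
    moreover have "r \<le> 1" using False by simp
    ultimately show ?thesis using BD_drift_le DB_drift_le by (simp add: mult_nonpos_nonpos)
  qed
  have sq: "c \<le> BD S (\<lambda>u v. (delta S u v)\<^sup>2) \<and> c \<le> DB S (\<lambda>u v. (delta S u v)\<^sup>2)"
  proof (cases "S \<noteq> {} \<and> S \<noteq> V")
    case True
    then show ?thesis using BD_sq[OF S] DB_sq[OF S] by (simp add: c_def)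
  next
    case False
    then have "c = 0" by (auto simp: c_def)
    then show ?thesis by (simp add: BD_nonneg DB_nonneg)
  qed
  have X1: "lam * c \<le> lam * (k * BD S (delta S) + BD S (\<lambda>u v. (delta S u v)\<^sup>2))"
    using dr sq l0 by (intro mult_left_mono) auto
  have X2: "(1 - lam) * c \<le> (1 - lam) * (k * DB S (delta S) + DB S (\<lambda>u v. (delta S u v)\<^sup>2))"
    using dr sq l1 by (intro mult_left_mono) auto
  have EE: "Exp S ff = ff S + lam * (k * BD S (delta S) + BD S (\<lambda>u v. (delta S u v)\<^sup>2))
      + (1 - lam) * (k * DB S (delta S) + DB S (\<lambda>u v. (delta S u v)\<^sup>2))"
    unfolding Exp_def BDe DBe by (simp add: algebra_simps)
  have "c = lam * c + (1 - lam) * c" by (simp add: algebra_simps)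
  then show ?thesis using X1 X2 EE unfolding c_def[symmetric] by linarith
qed

lemma Exp_card:
  assumes S: "S \<subseteq> V" and r1: "r = 1"
  shows "Exp S (\<lambda>T. real (card T)) = real (card S)"
proof -
  have fq: "(\<lambda>u v. real (card (take_type S u v))) = (\<lambda>u v. real (card S) + 1 * delta S u v + 0)"
    using card_tt[OF S] by simp
  have b: "BD S (delta S) = 0" using BD_drift_ge[of S] BD_drift_le[of S] r1 by simp
  have d: "DB S (delta S) = 0" using DB_drift_ge[of S] DB_drift_le[of S] r1 by simp
  show ?thesis unfolding Exp_def fq BD_lin DB_lin BD_one DB_one b d BD_zero DB_zero
    by (simp add: algebra_simps)
qed

lemma trans_nonneg: "S \<subseteq> V \<Longrightarrow> 0 \<le> moran_trans V E lam r S T"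
  unfolding moran_trans_def using l0 l1 rpos
  by (intro add_nonneg_nonneg mult_nonneg_nonneg sum_nonneg divide_nonneg_nonneg)
     (auto simp: fit_def)

lemma D_nonneg: "0 \<le> moran_dist V E lam r S0 t T"
  by (induction t arbitrary: T) (auto intro!: sum_nonneg mult_nonneg_nonneg trans_nonneg)

lemma D_step:
  "(\<Sum>T\<in>Pow V. moran_dist V E lam r S0 (Suc t) T * g T) = (\<Sum>S\<in>Pow V. moran_dist V E lam r S0 t S * Exp S g)"
proof -
  have "(\<Sum>T\<in>Pow V. moran_dist V E lam r S0 (Suc t) T * g T)
     = (\<Sum>T\<in>Pow V. \<Sum>S\<in>Pow V. moran_dist V E lam r S0 t S * (moran_trans V E lam r S T * g T))"
    by (simp add: sum_distrib_right mult.assoc)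
  also have "\<dots> = (\<Sum>S\<in>Pow V. \<Sum>T\<in>Pow V. moran_dist V E lam r S0 t S * (moran_trans V E lam r S T * g T))"
    by (rule sum.swap)
  also have "\<dots> = (\<Sum>S\<in>Pow V. moran_dist V E lam r S0 t S * Exp S g)"
  proof (intro sum.cong refl)
    fix S assume "S \<in> Pow V"
    then have "S \<subseteq> V" by simp
    then show "(\<Sum>T\<in>Pow V. moran_dist V E lam r S0 t S * (moran_trans V E lam r S T * g T))
        = moran_dist V E lam r S0 t S * Exp S g"
      by (simp add: sum_distrib_left[symmetric] trans_sum)
  qed
  finally show ?thesis .
qed

lemma D_zero: "S0 \<subseteq> V \<Longrightarrow> (\<Sum>T\<in>Pow V. moran_dist V E lam r S0 0 T * g T) = g S0"
proof -
  assume S0: "S0 \<subseteq> V"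
  have "(\<Sum>T\<in>Pow V. moran_dist V E lam r S0 0 T * g T) = (\<Sum>T\<in>Pow V. if T = S0 then g S0 else 0)"
    by (intro sum.cong refl) simp
  also have "\<dots> = g S0" using S0 finV by simp
  finally show ?thesis .
qed

lemma D_sum1: "S0 \<subseteq> V \<Longrightarrow> (\<Sum>T\<in>Pow V. moran_dist V E lam r S0 t T) = 1"
proof (induction t)
  case 0
  then show ?case using D_zero[of S0 "\<lambda>_. 1"] by simp
next
  case (Suc t)
  have "(\<Sum>T\<in>Pow V. moran_dist V E lam r S0 (Suc t) T * 1) = (\<Sum>S\<in>Pow V. moran_dist V E lam r S0 t S * 1)"
    unfolding D_step by (intro sum.cong refl) (simp add: Exp_one)
  then show ?case using Suc by simp
qed

definition "ind T = (if T \<noteq> {} \<and> T \<noteq> V then 1 else (0::real))"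
definition "NA S0 t = (\<Sum>T\<in>Pow V. moran_dist V E lam r S0 t T * ind T)"

lemma NA_nonneg: "0 \<le> NA S0 t"
  unfolding NA_def ind_def by (intro sum_nonneg mult_nonneg_nonneg D_nonneg) auto

lemma NA_eq:
  assumes S0: "S0 \<subseteq> V"
  shows "NA S0 t = 1 - moran_dist V E lam r S0 t {} - moran_dist V E lam r S0 t V"
proof -
  let ?D = "moran_dist V E lam r S0 t"
  have "NA S0 t = (\<Sum>T\<in>Pow V. ?D T - (if T = {} then ?D T else 0) - (if T = V then ?D T else 0))"
    unfolding NA_def ind_def using Vne by (intro sum.cong refl) auto
  also have "\<dots> = (\<Sum>T\<in>Pow V. ?D T) - (\<Sum>T\<in>Pow V. if T = {} then ?D T else 0) - (\<Sum>T\<in>Pow V. if T = V then ?D T else 0)"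
    by (simp add: sum_subtractf)
  also have "\<dots> = 1 - ?D {} - ?D V" using D_sum1[OF S0] finV by simp
  finally show ?thesis .
qed

definition "Phi S0 t = (\<Sum>T\<in>Pow V. moran_dist V E lam r S0 t T * ff T)"

lemma ff_bounds: "T \<subseteq> V \<Longrightarrow> 0 \<le> ff T \<and> ff T \<le> real (card V) ^ 2"
proof -
  assume T: "T \<subseteq> V"
  have c: "real (card T) \<le> real (card V)" using card_mono[OF finV T] by simp
  have "\<bar>real (card T) - aa\<bar> \<le> real (card V)" using c by (auto simp: aa_def)
  then have "(real (card T) - aa)\<^sup>2 \<le> (real (card V))\<^sup>2"
    by (metis abs_ge_self abs_le_square_iff abs_of_nat order.trans)
  then show ?thesis by (simp add: ff_def)
qed

lemma Phi_step:
  assumes S0: "S0 \<subseteq> V"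
  shows "Phi S0 t + c0 * NA S0 t \<le> Phi S0 (Suc t)"
proof -
  let ?D = "moran_dist V E lam r S0 t"
  have "Phi S0 t + c0 * NA S0 t = (\<Sum>S\<in>Pow V. ?D S * (ff S + c0 * ind S))"
    unfolding Phi_def NA_def by (simp add: distrib_left sum.distrib sum_distrib_left algebra_simps)
  also have "\<dots> \<le> (\<Sum>S\<in>Pow V. ?D S * Exp S ff)"
    using Exp_ff by (intro sum_mono mult_left_mono D_nonneg) (auto simp: ind_def)
  also have "\<dots> = Phi S0 (Suc t)" unfolding Phi_def D_step ..
  finally show ?thesis .
qed

lemma Phi_bounds:
  assumes S0: "S0 \<subseteq> V"
  shows "0 \<le> Phi S0 t \<and> Phi S0 t \<le> real (card V) ^ 2"
proof
  show "0 \<le> Phi S0 t" unfolding Phi_def using ff_bounds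
    by (intro sum_nonneg mult_nonneg_nonneg D_nonneg) auto
  have "Phi S0 t \<le> (\<Sum>T\<in>Pow V. moran_dist V E lam r S0 t T * real (card V) ^ 2)"
    unfolding Phi_def using ff_bounds by (intro sum_mono mult_left_mono D_nonneg) auto
  also have "\<dots> = real (card V) ^ 2" using D_sum1[OF S0] by (simp add: sum_distrib_right[symmetric])
  finally show "Phi S0 t \<le> real (card V) ^ 2" .
qed

lemma NA_partial:
  assumes S0: "S0 \<subseteq> V"
  shows "c0 * (\<Sum>t<k. NA S0 t) \<le> Phi S0 k - Phi S0 0"
proof (induction k)
  case 0
  then show ?case by simp
next
  case (Suc k)
  then show ?case using Phi_step[OF S0, of k] by (simp add: distrib_left)
qed

lemma NA_bound:
  assumes S0: "S0 \<subseteq> V"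
  shows "(\<Sum>t<k. NA S0 t) \<le> M / m * real (card V) ^ 4"
proof -
  have "c0 * (\<Sum>t<k. NA S0 t) \<le> real (card V) ^ 2"
    using NA_partial[OF S0, of k] Phi_bounds[OF S0, of k] Phi_bounds[OF S0, of 0] by linarith
  then have "(\<Sum>t<k. NA S0 t) \<le> real (card V) ^ 2 / c0"
    using c0_pos by (simp add: pos_le_divide_eq mult.commute)
  also have "\<dots> = M / m * real (card V) ^ 4"
    unfolding c0_def using m_pos mM by (simp add: field_simps power_add[symmetric] eval_nat_numeral)
  finally show ?thesis .
qed

lemma abs_bound:
  assumes S0: "S0 \<subseteq> V"
  shows "absorption_time V E lam r S0 \<le> ennreal (max r 1 / min r 1 * real (card V) ^ 4)"
proof -
  have eq: "absorption_time V E lam r S0 = (\<Sum>t. ennreal (NA S0 t))"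
    unfolding absorption_time_def using NA_eq[OF S0] by simp
  have "(\<Sum>t. ennreal (NA S0 t)) \<le> ennreal (M / m * real (card V) ^ 4)"
  proof (rule suminf_le_const)
    show "summable (\<lambda>t. ennreal (NA S0 t))" by simp
    fix k
    have "(\<Sum>t<k. ennreal (NA S0 t)) = ennreal (\<Sum>t<k. NA S0 t)"
      using NA_nonneg by (simp add: sum_ennreal)
    also have "\<dots> \<le> ennreal (M / m * real (card V) ^ 4)"
      by (rule ennreal_leI) (rule NA_bound[OF S0])
    finally show "(\<Sum>t<k. ennreal (NA S0 t)) \<le> ennreal (M / m * real (card V) ^ 4)" .
  qed
  then show ?thesis unfolding eq by (simp add: M_def m_def)
qed

lemma mart:
  assumes S0: "S0 \<subseteq> V" and r1: "r = 1"
  shows "(\<Sum>T\<in>Pow V. moran_dist V E lam r S0 t T * real (card T)) = real (card S0)"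
proof (induction t)
  case 0
  then show ?case using D_zero[OF S0, of "\<lambda>T. real (card T)"] by simp
next
  case (Suc t)
  have "(\<Sum>T\<in>Pow V. moran_dist V E lam r S0 (Suc t) T * real (card T))
      = (\<Sum>S\<in>Pow V. moran_dist V E lam r S0 t S * real (card S))"
    unfolding D_step using Exp_card[OF _ r1] by (intro sum.cong refl) simp
  then show ?case using Suc by simp
qed

lemma fix_r1:
  assumes S0: "S0 \<subseteq> V" and r1: "r = 1"
  shows "fix_prob V E lam r S0 = real (card S0) / real (card V)"
proof -
  let ?D = "\<lambda>t. moran_dist V E lam r S0 t"
  define R where "R t = (\<Sum>T\<in>Pow V. ?D t T * real (card T) * ind T)" for t
  have summ: "summable (NA S0)"
    by (rule summableI_nonneg_bounded[where x="M / m * real (card V) ^ 4"]) (use NA_nonneg NA_bound[OF S0] in auto)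
  then have NA0: "NA S0 \<longlonglongrightarrow> 0" by (rule summable_LIMSEQ_zero)
  have decomp: "real (card S0) = ?D t V * real (card V) + R t" for t
  proof -
    have "real (card S0) = (\<Sum>T\<in>Pow V. ?D t T * real (card T))" using mart[OF S0 r1] by simp
    also have "\<dots> = (\<Sum>T\<in>Pow V. ?D t T * real (card T) * ind T + (if T = V then ?D t T * real (card V) else 0))"
      unfolding ind_def using Vne by (intro sum.cong refl) auto
    also have "\<dots> = R t + ?D t V * real (card V)"
      unfolding R_def sum.distrib using finV by simp
    finally show ?thesis by simp
  qed
  have Rb: "0 \<le> R t \<and> R t \<le> real (card V) * NA S0 t" for t
  proof
    show "0 \<le> R t" unfolding R_def ind_def by (intro sum_nonneg mult_nonneg_nonneg D_nonneg) auto
    have "R t \<le> (\<Sum>T\<in>Pow V. real (card V) * (?D t T * ind T))"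
      unfolding R_def
    proof (intro sum_mono)
      fix T assume T: "T \<in> Pow V"
      have c: "real (card T) \<le> real (card V)" using card_mono[OF finV] T by simp
      have "?D t T * ind T * real (card T) \<le> ?D t T * ind T * real (card V)"
        using c D_nonneg by (intro mult_left_mono mult_nonneg_nonneg) (auto simp: ind_def)
      then show "?D t T * real (card T) * ind T \<le> real (card V) * (?D t T * ind T)"
        by (simp add: algebra_simps)
    qed
    also have "\<dots> = real (card V) * NA S0 t" unfolding NA_def by (simp add: sum_distrib_left)
    finally show "R t \<le> real (card V) * NA S0 t" .
  qed
  have R0: "R \<longlonglongrightarrow> 0"
  proof (rule tendsto_sandwich[of "\<lambda>_. 0" R sequentially "\<lambda>t. real (card V) * NA S0 t"])
    show "\<forall>\<^sub>F n in sequentially. 0 \<le> R n" using Rb by simp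
    show "\<forall>\<^sub>F n in sequentially. R n \<le> real (card V) * NA S0 n" using Rb by simp
    show "(\<lambda>_. 0) \<longlonglongrightarrow> (0::real)" by simp
    show "(\<lambda>t. real (card V) * NA S0 t) \<longlonglongrightarrow> 0" using tendsto_mult_right_zero[OF NA0] by simp
  qed
  have eqD: "(\<lambda>t. ?D t V) = (\<lambda>t. (real (card S0) - R t) / real (card V))"
  proof
    fix t show "?D t V = (real (card S0) - R t) / real (card V)" using decomp[of t] nV by (simp add: field_simps)
  qed
  have "(\<lambda>t. (real (card S0) - R t) / real (card V)) \<longlonglongrightarrow> (real (card S0) - 0) / real (card V)"
    using nV by (intro tendsto_divide tendsto_diff tendsto_const R0) auto
  then have "(\<lambda>t. ?D t V) \<longlonglongrightarrow> real (card S0) / real (card V)" unfolding eqD by simp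
  then show ?thesis unfolding fix_prob_def by (rule limI)
qed

end

theorem mainTheorem7:
  shows "(\<forall>(V::nat set) E lam S0.
            simple_graph V E \<and> graph_connected V E \<and> graph_regular V E \<and> card V \<ge> 2
            \<and> 0 \<le> lam \<and> lam \<le> 1 \<and> S0 \<subseteq> V
            \<longrightarrow> fix_prob V E lam 1 S0 = real (card S0) / real (card V))
       \<and> (\<forall>r::real. r > 0 \<longrightarrow> (\<exists>C::real. \<forall>(V::nat set) E lam S0.
            simple_graph V E \<and> graph_connected V E \<and> graph_regular V E \<and> card V \<ge> 2
            \<and> 0 \<le> lam \<and> lam \<le> 1 \<and> S0 \<subseteq> V
            \<longrightarrow> absorption_time V E lam r S0 \<le> ennreal (C * real (card V) ^ 4)))"
proof (intro conjI allI impI)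
  fix V :: "nat set" and E :: "nat \<Rightarrow> nat \<Rightarrow> bool" and lam :: real and S0 :: "nat set"
  assume h: "simple_graph V E \<and> graph_connected V E \<and> graph_regular V E \<and> card V \<ge> 2
            \<and> 0 \<le> lam \<and> lam \<le> 1 \<and> S0 \<subseteq> V"
  interpret mg V E lam 1 using h by unfold_locales auto
  show "fix_prob V E lam 1 S0 = real (card S0) / real (card V)" using fix_r1 h by simp
next
  fix r :: real
  assume r: "r > 0"
  show "\<exists>C::real. \<forall>(V::nat set) E lam S0.
            simple_graph V E \<and> graph_connected V E \<and> graph_regular V E \<and> card V \<ge> 2
            \<and> 0 \<le> lam \<and> lam \<le> 1 \<and> S0 \<subseteq> V
            \<longrightarrow> absorption_time V E lam r S0 \<le> ennreal (C * real (card V) ^ 4)"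
  proof (intro exI allI impI)
    fix V :: "nat set" and E :: "nat \<Rightarrow> nat \<Rightarrow> bool" and lam :: real and S0 :: "nat set"
    assume h: "simple_graph V E \<and> graph_connected V E \<and> graph_regular V E \<and> card V \<ge> 2
            \<and> 0 \<le> lam \<and> lam \<le> 1 \<and> S0 \<subseteq> V"
    interpret mg V E lam r using h r by unfold_locales auto
    show "absorption_time V E lam r S0 \<le> ennreal (max r 1 / min r 1 * real (card V) ^ 4)"
      using abs_bound h by simp
  qed
qed

end
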